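(* Let $A,B,C$ be distinct transfer matrices, i.e. distinct matrices of the form $\begin{bmatrix}t&-1\\1&0\end{bmatrix}$ with $t\in\mathbb{R}$. If $AB$ and $AC$ are hyperbolic, then $AB$ and $AC$ have no common eigenvector. Similarly, if $BA$ and $CA$ are hyperbolic, then $BA$ and $CA$ have no common eigenvector.
   Context: A matrix in $SL(2,\mathbb{R})$ is hyperbolic if the absolute value of its trace is greater than $2$. Two matrices share an eigenvector if some nonzero vector is an eigenvector of both (possibly for different eigenvalues). *)

theory Defs
  imports "HOL-Analysis.Analysis"
begin

definition transfer :: "real \<Rightarrow> real^2^2" where
  "transfer t = (\<chi> i j. if i = 1 then (if j = 1 then t else -1)
                          else (if j = 1 then 1 else 0))"

definition is_transfer :: "real^2^2 \<Rightarrow> bool" where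
  "is_transfer A \<longleftrightarrow> (\<exists>t. A = transfer t)"

definition trace2 :: "real^2^2 \<Rightarrow> real" where
  "trace2 M = M $ 1 $ 1 + M $ 2 $ 2"

definition hyperbolic :: "real^2^2 \<Rightarrow> bool" where
  "hyperbolic M \<longleftrightarrow> det M = 1 \<and> \<bar>trace2 M\<bar> > 2"

definition is_eigenvector :: "real^2^2 \<Rightarrow> real^2 \<Rightarrow> bool" where
  "is_eigenvector M v \<longleftrightarrow> v \<noteq> 0 \<and> (\<exists>c. M *v v = c *\<^sub>R v)"

definition share_eigenvector :: "real^2^2 \<Rightarrow> real^2^2 \<Rightarrow> bool" where
  "share_eigenvector M N \<longleftrightarrow> (\<exists>v. is_eigenvector M v \<and> is_eigenvector N v)"

end

theory Submission
  imports Defs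
begin


lemma tt: "transfer a ** transfer b = (\<chi> i j. if i = 1 then (if j = 1 then a*b-1 else -a) else (if j = 1 then b else -1))"
  by (simp add: transfer_def matrix_matrix_mult_def vec_eq_iff forall_2 sum_2)
lemma mv: "(M::real^2^2) *v v = (\<chi> i. M$i$1 * v$1 + M$i$2 * v$2)"
  by (simp add: matrix_vector_mult_def vec_eq_iff forall_2 sum_2)
lemma veq: "((v::real^2) = w) = (v$1 = w$1 \<and> v$2 = w$2)"
  by (simp add: vec_eq_iff forall_2)
lemma hyp_tt: "hyperbolic (transfer a ** transfer b) \<Longrightarrow> a*b \<noteq> 0"
proof -
  assume "hyperbolic (transfer a ** transfer b)"
  then have "\<bar>a*b-2\<bar> > 2" by (simp add: hyperbolic_def trace2_def tt)
  then show ?thesis by auto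
qed
lemma p1: "b \<noteq> c \<Longrightarrow> hyperbolic (transfer a ** transfer b) \<Longrightarrow> \<not> share_eigenvector (transfer a ** transfer b) (transfer a ** transfer c)"
proof
  assume h: "b \<noteq> c" "hyperbolic (transfer a ** transfer b)" "share_eigenvector (transfer a ** transfer b) (transfer a ** transfer c)"
  from h(2) have ab: "a*b \<noteq> 0" by (rule hyp_tt)
  from h(3) obtain v l m where v: "v \<noteq> 0" "transfer a ** transfer b *v v = l *\<^sub>R v" "transfer a ** transfer c *v v = m *\<^sub>R v"
    unfolding share_eigenvector_def is_eigenvector_def by blast
  define x where "x = v$1"
  define y where "y = v$2"
  have nz: "x \<noteq> 0 \<or> y \<noteq> 0" using v(1) by (auto simp: x_def y_def veq)
  have e1: "(a*b-1)*x - a*y = l*x" "b*x - y = l*y" using v(2) by (auto simp: tt mv veq x_def y_def)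
  have e2: "(a*c-1)*x - a*y = m*x" "c*x - y = m*y" using v(3) by (auto simp: tt mv veq x_def y_def)
  show False
  proof (cases "x = 0")
    case True
    then have "y \<noteq> 0" using nz by auto
    then have "a = 0" using e1 True by auto
    then show False using ab by simp
  next
    case False
    have d: "a*(b-c)*x = (l-m)*x" "(b-c)*x = (l-m)*y" using e1 e2 by algebra+
    have lm: "l - m = a*(b-c)" using d(1) False by simp
    have xa: "x = a*y" using d(2) lm h(1) by (simp add: mult.assoc)
    have a0: "a \<noteq> 0" "y \<noteq> 0" using ab False xa by auto
    have "a*((a*b-2-l)*y) = 0" using e1(1) xa by algebra
    then have l1: "l = a*b-2" using a0 by simp
    have "(a*b-1-l)*y = 0" using e1(2) xa by algebra
    then have "l = a*b-1" using a0 by simp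
    then show False using l1 by simp
  qed
qed

lemma p2: "b \<noteq> c \<Longrightarrow> hyperbolic (transfer b ** transfer a) \<Longrightarrow> \<not> share_eigenvector (transfer b ** transfer a) (transfer c ** transfer a)"
proof
  assume h: "b \<noteq> c" "hyperbolic (transfer b ** transfer a)" "share_eigenvector (transfer b ** transfer a) (transfer c ** transfer a)"
  from h(2) have ab: "b*a \<noteq> 0" by (rule hyp_tt)
  from h(3) obtain v l m where v: "v \<noteq> 0" "transfer b ** transfer a *v v = l *\<^sub>R v" "transfer c ** transfer a *v v = m *\<^sub>R v"
    unfolding share_eigenvector_def is_eigenvector_def by blast
  define x where "x = v$1"
  define y where "y = v$2"
  have nz: "x \<noteq> 0 \<or> y \<noteq> 0" using v(1) by (auto simp: x_def y_def veq)
  have e1: "(b*a-1)*x - b*y = l*x" "a*x - y = l*y" using v(2) by (auto simp: tt mv veq x_def y_def)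
  have e2: "(c*a-1)*x - c*y = m*x" "a*x - y = m*y" using v(3) by (auto simp: tt mv veq x_def y_def)
  have "(l-m)*y = 0" using e1(2) e2(2) by algebra
  then have "l - m = 0 \<or> y = 0" by simp
  then show False
  proof
    assume "l - m = 0"
    then have lm: "l = m" by simp
    have "(b-c)*(a*x-y) = 0" using e1(1) e2(1) lm by algebra
    then have "a*x-y = 0" using h(1) by simp
    then have yx: "y = a*x" using h(1) by simp
    then have "l*y = 0" using e1(2) by simp
    then have "l = 0 \<or> y = 0" by simp
    then show False
    proof
      assume "l = 0"
      then have "x = 0" using e1(1) yx by algebra
      then show False using nz yx by simp
    next
      assume "y = 0"
      then show False using nz yx ab by simp
    qed
  next
    assume "y = 0"
    then show False using nz e1(2) ab by simp
  qed
qed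

theorem lemma5:
  fixes A B C :: "real^2^2"
  assumes "is_transfer A" "is_transfer B" "is_transfer C"
    and "A \<noteq> B" "A \<noteq> C" "B \<noteq> C"
  shows "(hyperbolic (A ** B) \<and> hyperbolic (A ** C) \<longrightarrow> \<not> share_eigenvector (A ** B) (A ** C))
       \<and> (hyperbolic (B ** A) \<and> hyperbolic (C ** A) \<longrightarrow> \<not> share_eigenvector (B ** A) (C ** A))"
proof -
  obtain a b c where abc: "A = transfer a" "B = transfer b" "C = transfer c"
    using assms(1-3) unfolding is_transfer_def by blast
  have "b \<noteq> c" using assms(6) abc by auto
  then show ?thesis using p1 p2 abc by blast
qed

end
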